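(* Let $n\in\mathbb N$ and let $X_1,\dots,X_n$ be independent random variables with ${\sf E}X_i=0$ and $0<{\sf E}X_i^2<\infty$. Then for every $\varepsilon\in(0,\infty)$, $$L_n(1)+M_n(1)\le L_n(\varepsilon)+M_n(\varepsilon).$$
   Context: $B_n^2=\sum_{i=1}^n{\sf E}X_i^2$. For $\varepsilon>0$, $L_n(\varepsilon)=B_n^{-2}\sum_{i=1}^n{\sf E}X_i^2\mathbb I(|X_i|\ge\varepsilon B_n)$ and $M_n(\varepsilon)=B_n^{-3}\sum_{i=1}^n{\sf E}|X_i|^3\mathbb I(|X_i|<\varepsilon B_n)$, where $\mathbb I(A)$ is the indicator of the event $A$. *)

theory Defs
  imports "HOL-Probability.Probability"
begin

definition Bsq :: "'a measure \<Rightarrow> (nat \<Rightarrow> 'a \<Rightarrow> real) \<Rightarrow> nat \<Rightarrow> real" where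
  "Bsq M X n = (\<Sum>i\<in>{1..n}. prob_space.expectation M (\<lambda>\<omega>. (X i \<omega>)^2))"

definition Lfrac :: "'a measure \<Rightarrow> (nat \<Rightarrow> 'a \<Rightarrow> real) \<Rightarrow> nat \<Rightarrow> real \<Rightarrow> real" where
  "Lfrac M X n \<epsilon> = (\<Sum>i\<in>{1..n}. prob_space.expectation M
      (\<lambda>\<omega>. (X i \<omega>)^2 * indicator {\<omega>. \<bar>X i \<omega>\<bar> \<ge> \<epsilon> * sqrt (Bsq M X n)} \<omega>)) / Bsq M X n"

definition Mfrac :: "'a measure \<Rightarrow> (nat \<Rightarrow> 'a \<Rightarrow> real) \<Rightarrow> nat \<Rightarrow> real \<Rightarrow> real" where
  "Mfrac M X n \<epsilon> = (\<Sum>i\<in>{1..n}. prob_space.expectation M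
      (\<lambda>\<omega>. \<bar>X i \<omega>\<bar>^3 * indicator {\<omega>. \<bar>X i \<omega>\<bar> < \<epsilon> * sqrt (Bsq M X n)} \<omega>)) / (sqrt (Bsq M X n))^3"

end

theory Submission
  imports Defs
begin

lemma pw:
  fixes B e t :: real
  assumes "B > 0" "e > 0" "t \<ge> 0"
  shows "t^2/B^2 * of_bool (1*B \<le> t) + t^3/B^3 * of_bool (t < 1*B)
       \<le> t^2/B^2 * of_bool (e*B \<le> t) + t^3/B^3 * of_bool (t < e*B)"
proof -
  define u where "u = t/B"
  have u0: "u \<ge> 0" using assms by (simp add: u_def)
  have h2: "t^2/B^2 = u^2" by (simp add: u_def power_divide)
  have h3: "t^3/B^3 = u^3" by (simp add: u_def power_divide)
  have c1: "(1*B \<le> t) = (1 \<le> u)" using assms by (simp add: u_def le_divide_eq)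
  have ce: "(e*B \<le> t) = (e \<le> u)" using assms by (simp add: u_def le_divide_eq)
  have c1': "(t < 1*B) = (u < 1)" using assms by (simp add: u_def divide_less_eq)
  have ce': "(t < e*B) = (u < e)" using assms by (simp add: u_def divide_less_eq)
  have a: "u \<ge> 1 \<Longrightarrow> u^2 \<le> u^3"
    by (rule power_increasing) auto
  have b: "u < 1 \<Longrightarrow> u^3 \<le> u^2"
    by (simp add: power_decreasing u0)
  show ?thesis unfolding h2 h3 c1 ce c1' ce' using a b by auto
qed

theorem lemma1:
  fixes M :: "'a measure" and X :: "nat \<Rightarrow> 'a \<Rightarrow> real" and n :: nat and \<epsilon> :: real
  assumes "prob_space M"
    and "prob_space.indep_vars M (\<lambda>_. borel) X {1..n}"
    and "\<And>i. i \<in> {1..n} \<Longrightarrow> integrable M (X i)"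
    and "\<And>i. i \<in> {1..n} \<Longrightarrow> prob_space.expectation M (X i) = 0"
    and "\<And>i. i \<in> {1..n} \<Longrightarrow> integrable M (\<lambda>\<omega>. (X i \<omega>)^2)"
    and "\<And>i. i \<in> {1..n} \<Longrightarrow> 0 < prob_space.expectation M (\<lambda>\<omega>. (X i \<omega>)^2)"
    and "0 < \<epsilon>"
  shows "Lfrac M X n 1 + Mfrac M X n 1 \<le> Lfrac M X n \<epsilon> + Mfrac M X n \<epsilon>"
proof (cases "n = 0")
  case True
  then show ?thesis by (simp add: Lfrac_def Mfrac_def Bsq_def)
next
  case False
  interpret prob_space M by fact
  define b where "b = Bsq M X n"
  have bpos: "b > 0" unfolding b_def Bsq_def
    using False assms(6) by (intro sum_pos) auto
  define B where "B = sqrt b"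
  have Bpos: "B > 0" using bpos by (simp add: B_def)
  have bB: "b = B^2" using bpos by (simp add: B_def)
  define F where "F e i \<omega> = (X i \<omega>)^2/B^2 * of_bool (e*B \<le> \<bar>X i \<omega>\<bar>)
       + \<bar>X i \<omega>\<bar>^3/B^3 * of_bool (\<bar>X i \<omega>\<bar> < e*B)" for e i \<omega>
  have meas: "X i \<in> borel_measurable M" if "i \<in> {1..n}" for i
    using assms(3)[OF that] by auto
  have intA: "integrable M (\<lambda>\<omega>. (X i \<omega>)^2 * indicator {\<omega>. \<bar>X i \<omega>\<bar> \<ge> e * B} \<omega>)"
    if i: "i \<in> {1..n}" for i e
  proof (rule Bochner_Integration.integrable_bound[OF assms(5)[OF i]])
    note [measurable] = meas[OF i]
    show "(\<lambda>\<omega>. (X i \<omega>)^2 * indicator {\<omega>. \<bar>X i \<omega>\<bar> \<ge> e * B} \<omega>) \<in> borel_measurable M"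
      unfolding indicator_def by measurable
    show "AE x in M. norm ((X i x)^2 * indicator {\<omega>. \<bar>X i \<omega>\<bar> \<ge> e * B} x) \<le> norm ((X i x)^2)"
      by (auto simp: indicator_def)
  qed
  have intC: "integrable M (\<lambda>\<omega>. \<bar>X i \<omega>\<bar>^3 * indicator {\<omega>. \<bar>X i \<omega>\<bar> < e * B} \<omega>)"
    if i: "i \<in> {1..n}" and e: "e > 0" for i e
  proof (rule Bochner_Integration.integrable_bound[OF integrable_mult_left[OF assms(5)[OF i], of "e*B"]])
    note [measurable] = meas[OF i]
    show "(\<lambda>\<omega>. \<bar>X i \<omega>\<bar>^3 * indicator {\<omega>. \<bar>X i \<omega>\<bar> < e * B} \<omega>) \<in> borel_measurable M"
      unfolding indicator_def by measurable
    show "AE x in M. norm (\<bar>X i x\<bar>^3 * indicator {\<omega>. \<bar>X i \<omega>\<bar> < e * B} x) \<le> norm ((X i x)^2*(e*B))"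
    proof -
      have "norm (\<bar>X i x\<bar>^3 * indicator {\<omega>. \<bar>X i \<omega>\<bar> < e * B} x) \<le> norm ((X i x)^2*(e*B))" for x
      proof -
      have "\<bar>X i x\<bar>^3 * indicator {\<omega>. \<bar>X i \<omega>\<bar> < e * B} x \<le> e*B*(X i x)^2"
      proof (cases "\<bar>X i x\<bar> < e*B")
        case True
        have "\<bar>X i x\<bar>^3 = \<bar>X i x\<bar> * (X i x)^2" by (simp add: power3_eq_cube power2_eq_square)
        also have "\<dots> \<le> e*B*(X i x)^2" using True by (intro mult_right_mono) auto
        finally show ?thesis using True by (simp add: indicator_def)
      next
        case False
        then show ?thesis using e Bpos by (simp add: indicator_def)
      qed
      then show "norm (\<bar>X i x\<bar>^3 * indicator {\<omega>. \<bar>X i \<omega>\<bar> < e * B} x) \<le> norm ((X i x)^2*(e*B))"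
        using e Bpos by (simp add: indicator_def mult.commute)
      qed
      then show ?thesis by simp
    qed
  qed
  have intF: "integrable M (F e i)" if i: "i \<in> {1..n}" and e: "e > 0" for i e
  proof -
    have "integrable M (\<lambda>\<omega>. (X i \<omega>)^2 * indicator {\<omega>. \<bar>X i \<omega>\<bar> \<ge> e * B} \<omega> / B^2
       + \<bar>X i \<omega>\<bar>^3 * indicator {\<omega>. \<bar>X i \<omega>\<bar> < e * B} \<omega> / B^3)"
      using intA[OF i] intC[OF i e] by auto
    moreover have "(\<lambda>\<omega>. (X i \<omega>)^2 * indicator {\<omega>. \<bar>X i \<omega>\<bar> \<ge> e * B} \<omega> / B^2
       + \<bar>X i \<omega>\<bar>^3 * indicator {\<omega>. \<bar>X i \<omega>\<bar> < e * B} \<omega> / B^3) = F e i"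
      by (auto simp: F_def indicator_def fun_eq_iff)
    ultimately show ?thesis by simp
  qed
  have eq: "Lfrac M X n e + Mfrac M X n e = (\<Sum>i\<in>{1..n}. expectation (F e i))" if e: "e > 0" for e
  proof -
    have "Lfrac M X n e + Mfrac M X n e =
      (\<Sum>i\<in>{1..n}. expectation (\<lambda>\<omega>. (X i \<omega>)^2 * indicator {\<omega>. \<bar>X i \<omega>\<bar> \<ge> e * B} \<omega>) / B^2
        + expectation (\<lambda>\<omega>. \<bar>X i \<omega>\<bar>^3 * indicator {\<omega>. \<bar>X i \<omega>\<bar> < e * B} \<omega>) / B^3)"
      unfolding Lfrac_def Mfrac_def b_def[symmetric] B_def[symmetric] bB
      using Bpos by (simp add: sum.distrib sum_divide_distrib)
    also have "\<dots> = (\<Sum>i\<in>{1..n}. expectation (F e i))"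
    proof (rule sum.cong[OF refl])
      fix i assume i: "i \<in> {1..n}"
      have "expectation (F e i) = expectation (\<lambda>\<omega>. (X i \<omega>)^2 * indicator {\<omega>. \<bar>X i \<omega>\<bar> \<ge> e * B} \<omega> / B^2
       + \<bar>X i \<omega>\<bar>^3 * indicator {\<omega>. \<bar>X i \<omega>\<bar> < e * B} \<omega> / B^3)"
        by (rule arg_cong[where f=expectation]) (auto simp: F_def indicator_def fun_eq_iff)
      also have "\<dots> = expectation (\<lambda>\<omega>. (X i \<omega>)^2 * indicator {\<omega>. \<bar>X i \<omega>\<bar> \<ge> e * B} \<omega>) / B^2
        + expectation (\<lambda>\<omega>. \<bar>X i \<omega>\<bar>^3 * indicator {\<omega>. \<bar>X i \<omega>\<bar> < e * B} \<omega>) / B^3"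
        using intA[OF i] intC[OF i e] by simp
      finally show "expectation (\<lambda>\<omega>. (X i \<omega>)^2 * indicator {\<omega>. \<bar>X i \<omega>\<bar> \<ge> e * B} \<omega>) / B^2
        + expectation (\<lambda>\<omega>. \<bar>X i \<omega>\<bar>^3 * indicator {\<omega>. \<bar>X i \<omega>\<bar> < e * B} \<omega>) / B^3 = expectation (F e i)"
        by simp
    qed
    finally show ?thesis .
  qed
  have "(\<Sum>i\<in>{1..n}. expectation (F 1 i)) \<le> (\<Sum>i\<in>{1..n}. expectation (F \<epsilon> i))"
  proof (rule sum_mono)
    fix i assume i: "i \<in> {1..n}"
    show "expectation (F 1 i) \<le> expectation (F \<epsilon> i)"
    proof (rule integral_mono[OF intF[OF i] intF[OF i]])
      fix \<omega>
      have "\<bar>X i \<omega>\<bar>^2 = (X i \<omega>)^2" by simp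
      then show "F 1 i \<omega> \<le> F \<epsilon> i \<omega>"
        using pw[OF Bpos assms(7) abs_ge_zero[of "X i \<omega>"]] unfolding F_def by simp
    qed (use assms(7) in auto)
  qed
  then show ?thesis using eq[of 1] eq[OF assms(7)] by simp
qed

end
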